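(* Let $G$ be a simple biconnected graph with a vertex $w$ such that the set $F$ of edges not incident to $w$ is a flacet of $\mathcal{M}(G)$. If $F$ is $k$-level, then $G$ has a minor isomorphic to $\operatorname{cone}(H)$ for some minimally biconnected graph $H$ on $k$ vertices.
   Context: The graphic matroid $\mathcal{M}(G)$ has ground set $E(G)$ and bases the spanning forests. A flacet of a matroid $\mathcal{M}$ on $E$ is a flat $\emptyset\neq S\subsetneq E$ such that $\mathcal{M}|_S$ and $\mathcal{M}/S$ are connected. A flacet $F$ is $k$-level if $\ell_F(x)=\sum_{e\in F}x_e$ takes exactly $k$ distinct values on $\{\mathbf{1}_B: B \text{ a basis}\}$. The cone over a graph $H=(V,E)$ with apex $w\notin V$ is the graph $(V\cup\{w\}, E\cup\{wv:v\in V\})$. A graph is minimally biconnected if it is biconnected and $H\setminus e$ is not biconnected for every edge $e$. *)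

theory Defs
  imports Main
begin

definition simple_graph :: "'a set \<Rightarrow> 'a set set \<Rightarrow> bool" where
  "simple_graph V E \<longleftrightarrow> finite V \<and> (\<forall>e\<in>E. e \<subseteq> V \<and> card e = 2)"

definition reach :: "'a set set \<Rightarrow> 'a \<Rightarrow> 'a \<Rightarrow> bool" where
  "reach A x y \<longleftrightarrow> (\<lambda>u v. {u, v} \<in> A)\<^sup>*\<^sup>* x y"

definition graph_connected :: "'a set \<Rightarrow> 'a set set \<Rightarrow> bool" where
  "graph_connected V E \<longleftrightarrow> (\<forall>x\<in>V. \<forall>y\<in>V. reach E x y)"

definition delete_vertex :: "'a set \<Rightarrow> 'a set set \<Rightarrow> 'a \<Rightarrow> 'a set \<times> 'a set set" where
  "delete_vertex V E v = (V - {v}, {e \<in> E. v \<notin> e})"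

text \<open>Biconnected (2-connected, with K2 counted as biconnected): at least two vertices,
  connected, and no cut vertex.\<close>
definition biconnected :: "'a set \<Rightarrow> 'a set set \<Rightarrow> bool" where
  "biconnected V E \<longleftrightarrow> card V \<ge> 2 \<and> graph_connected V E \<and>
     (\<forall>v\<in>V. graph_connected (V - {v}) {e \<in> E. v \<notin> e})"

definition minimally_biconnected :: "'a set \<Rightarrow> 'a set set \<Rightarrow> bool" where
  "minimally_biconnected V E \<longleftrightarrow> biconnected V E \<and> (\<forall>e\<in>E. \<not> biconnected V (E - {e}))"

definition cone :: "'a set \<Rightarrow> 'a set set \<Rightarrow> 'a \<Rightarrow> 'a set \<times> 'a set set" where
  "cone V E w = (insert w V, E \<union> {{w, v} | v. v \<in> V})"

text \<open>G = (VG, EG) has a minor isomorphic to H = (VH, EH): there are pairwise disjoint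
  nonempty connected branch sets X v (v in VH) in G such that every edge uv of H
  is realised by an edge of G between X u and X v.\<close>
definition has_minor :: "'a set \<Rightarrow> 'a set set \<Rightarrow> 'b set \<Rightarrow> 'b set set \<Rightarrow> bool" where
  "has_minor VG EG VH EH \<longleftrightarrow>
     (\<exists>X :: 'b \<Rightarrow> 'a set.
        (\<forall>v\<in>VH. X v \<noteq> {} \<and> X v \<subseteq> VG \<and> graph_connected (X v) {e \<in> EG. e \<subseteq> X v}) \<and>
        (\<forall>u\<in>VH. \<forall>v\<in>VH. u \<noteq> v \<longrightarrow> X u \<inter> X v = {}) \<and>
        (\<forall>u v. {u, v} \<in> EH \<longrightarrow> (\<exists>x\<in>X u. \<exists>y\<in>X v. {x, y} \<in> EG)))"

definition m_basis :: "'e set \<Rightarrow> ('e set \<Rightarrow> bool) \<Rightarrow> 'e set \<Rightarrow> bool" where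
  "m_basis E indep B \<longleftrightarrow> B \<subseteq> E \<and> indep B \<and> (\<forall>e\<in>E - B. \<not> indep (insert e B))"

definition m_circuit :: "'e set \<Rightarrow> ('e set \<Rightarrow> bool) \<Rightarrow> 'e set \<Rightarrow> bool" where
  "m_circuit E indep C \<longleftrightarrow> C \<subseteq> E \<and> \<not> indep C \<and> (\<forall>D. D \<subset> C \<longrightarrow> indep D)"

definition m_rank :: "('e set \<Rightarrow> bool) \<Rightarrow> 'e set \<Rightarrow> nat" where
  "m_rank indep X = Max (card ` {I. I \<subseteq> X \<and> indep I})"

definition m_flat :: "'e set \<Rightarrow> ('e set \<Rightarrow> bool) \<Rightarrow> 'e set \<Rightarrow> bool" where
  "m_flat E indep S \<longleftrightarrow> S \<subseteq> E \<and> (\<forall>e\<in>E - S. m_rank indep (insert e S) > m_rank indep S)"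

text \<open>M|S is connected: any two distinct elements of S lie in a common circuit of M|S
  (circuits of M|S are the circuits of M contained in S).\<close>
definition restriction_connected :: "'e set \<Rightarrow> ('e set \<Rightarrow> bool) \<Rightarrow> 'e set \<Rightarrow> bool" where
  "restriction_connected E indep S \<longleftrightarrow>
     (\<forall>e\<in>S. \<forall>f\<in>S. e \<noteq> f \<longrightarrow> (\<exists>C. m_circuit E indep C \<and> C \<subseteq> S \<and> e \<in> C \<and> f \<in> C))"

text \<open>Circuits of M/S: the minimal nonempty sets of the form C - S, C a circuit of M.\<close>
definition contraction_circuit :: "'e set \<Rightarrow> ('e set \<Rightarrow> bool) \<Rightarrow> 'e set \<Rightarrow> 'e set \<Rightarrow> bool" where
  "contraction_circuit E indep S D \<longleftrightarrow>
     D \<noteq> {} \<and> (\<exists>C. m_circuit E indep C \<and> D = C - S) \<and>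
     (\<forall>D'. D' \<noteq> {} \<and> (\<exists>C. m_circuit E indep C \<and> D' = C - S) \<longrightarrow> \<not> D' \<subset> D)"

definition contraction_connected :: "'e set \<Rightarrow> ('e set \<Rightarrow> bool) \<Rightarrow> 'e set \<Rightarrow> bool" where
  "contraction_connected E indep S \<longleftrightarrow>
     (\<forall>e\<in>E - S. \<forall>f\<in>E - S. e \<noteq> f \<longrightarrow>
        (\<exists>D. contraction_circuit E indep S D \<and> e \<in> D \<and> f \<in> D))"

definition flacet :: "'e set \<Rightarrow> ('e set \<Rightarrow> bool) \<Rightarrow> 'e set \<Rightarrow> bool" where
  "flacet E indep S \<longleftrightarrow> m_flat E indep S \<and> S \<noteq> {} \<and> S \<subset> E \<and>
     restriction_connected E indep S \<and> contraction_connected E indep S"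

text \<open>The linear form sum_{e in F} x_e evaluated at the indicator vector of B is card (B \<inter> F).\<close>
definition k_level :: "'e set \<Rightarrow> ('e set \<Rightarrow> bool) \<Rightarrow> 'e set \<Rightarrow> nat \<Rightarrow> bool" where
  "k_level E indep F k \<longleftrightarrow> card {card (B \<inter> F) | B. m_basis E indep B} = k"

text \<open>An edge set is independent (a forest) iff it contains no cycle, i.e. no edge
  {u,v} of it has its endpoints joined by a path in the remaining edges.\<close>
definition graphic_indep :: "'a set set \<Rightarrow> bool" where
  "graphic_indep A \<longleftrightarrow> (\<forall>u v. {u, v} \<in> A \<longrightarrow> \<not> reach (A - {{u, v}}) u v)"

end

theory Submission
  imports Defs
begin


lemma reach_refl[simp]: "reach A x x"
  by (simp add: reach_def)

lemma reach_step: "{x,y} \<in> A \<Longrightarrow> reach A x y"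
  by (simp add: reach_def r_into_rtranclp)

lemma reach_trans: "reach A x y \<Longrightarrow> reach A y z \<Longrightarrow> reach A x z"
  unfolding reach_def by (rule rtranclp_trans)

lemma reach_sym: "reach A x y \<Longrightarrow> reach A y x"
  unfolding reach_def
proof (induction rule: rtranclp_induct)
  case base then show ?case by simp
next
  case (step y z)
  then have "{z,y} \<in> A" by (simp add: insert_commute)
  then show ?case using step(3) by (meson converse_rtranclp_into_rtranclp)
qed

lemma reach_edge_trans: "reach A x y \<Longrightarrow> {y,z} \<in> A \<Longrightarrow> reach A x z"
  using reach_trans reach_step by metis

lemma reach_mono: "reach A x y \<Longrightarrow> A \<subseteq> B \<Longrightarrow> reach B x y"
  unfolding reach_def by (erule rtranclp_mono[THEN predicate2D, rotated]) auto

lemma reach_map: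
  assumes "reach S x y"
    and "\<And>a b. {a,b} \<in> S \<Longrightarrow> \<pi> a = \<pi> b \<or> {\<pi> a, \<pi> b} \<in> T"
  shows "reach T (\<pi> x) (\<pi> y)"
  using assms(1) unfolding reach_def
proof (induction rule: rtranclp_induct)
  case base then show ?case by simp
next
  case (step y z)
  from assms(2)[OF step(2)] show ?case
    using step(3) by (metis reach_def reach_edge_trans)
qed

lemma reach_closed:
  assumes "reach S x y" "x \<in> P" "\<And>a b. {a,b} \<in> S \<Longrightarrow> a \<in> P \<Longrightarrow> b \<in> P"
  shows "y \<in> P"
  using assms(1,2) unfolding reach_def
  by (induction rule: rtranclp_induct) (auto intro: assms(3))

lemma reach_restrict:
  assumes "reach S x y" "x \<in> P" "\<And>a b. {a,b} \<in> S \<Longrightarrow> a \<in> P \<Longrightarrow> b \<in> P"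
  shows "reach {e\<in>S. e \<subseteq> P} x y"
  using assms(1,2) unfolding reach_def
proof (induction rule: rtranclp_induct)
  case base then show ?case by simp
next
  case (step y z)
  have "reach S x y" using step(1) by (simp add: reach_def)
  then have "y \<in> P" using reach_closed step(4) assms(3) by metis
  then have "z \<in> P" using assms(3) step(2) by blast
  with \<open>y\<in>P\<close> step show ?case by (simp add: rtranclp.rtrancl_into_rtrancl)
qed

lemma reach_cases: "reach S x y \<Longrightarrow> x = y \<or> (x \<in> \<Union>S \<and> y \<in> \<Union>S)"
  unfolding reach_def
  by (induction rule: rtranclp_induct) auto

lemma reach_insert:
  assumes "reach (insert {u,v} A) x y"
  shows "reach A x y \<or> (reach A x u \<and> reach A v y) \<or> (reach A x v \<and> reach A u y)"
  using assms unfolding reach_def[of "insert _ _"]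
proof (induction rule: rtranclp_induct)
  case base then show ?case by simp
next
  case (step y z)
  from step(2) consider "{y,z} \<in> A" | "{y,z} = {u,v}" by blast
  then show ?case
  proof cases
    case 1
    then have yz: "reach A y z" by (rule reach_step)
    from step(3) show ?thesis
    proof (elim disjE conjE)
      assume a: "reach A x y" show ?thesis using reach_trans[OF a yz] by (rule disjI1)
    next
      assume a: "reach A x u" "reach A v y" show ?thesis using a(1) reach_trans[OF a(2) yz] by simp
    next
      assume a: "reach A x v" "reach A u y" show ?thesis using a(1) reach_trans[OF a(2) yz] by simp
    qed
  next
    case 2
    then have "(y = u \<and> z = v) \<or> (y = v \<and> z = u)" by (auto simp: doubleton_eq_iff)
    then show ?thesis
    proof
      assume yz: "y = u \<and> z = v"
      show ?thesis using step(3) unfolding yz[THEN conjunct1] yz[THEN conjunct2]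
        by (metis reach_refl)
    next
      assume yz: "y = v \<and> z = u"
      show ?thesis using step(3) unfolding yz[THEN conjunct1] yz[THEN conjunct2]
        by (metis reach_refl)
    qed
  qed
qed

lemma reach_insert_iff:
  "reach (insert {u,v} A) x y \<longleftrightarrow> reach A x y \<or> (reach A x u \<and> reach A v y) \<or> (reach A x v \<and> reach A u y)"
proof
  assume "reach (insert {u,v} A) x y" then show "reach A x y \<or> (reach A x u \<and> reach A v y) \<or> (reach A x v \<and> reach A u y)"
    by (rule reach_insert)
next
  have s: "A \<subseteq> insert {u,v} A" by blast
  have uv: "reach (insert {u,v} A) u v" "reach (insert {u,v} A) v u"
    by (auto intro: reach_step simp: insert_commute)
  assume "reach A x y \<or> (reach A x u \<and> reach A v y) \<or> (reach A x v \<and> reach A u y)"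
  then show "reach (insert {u,v} A) x y"
    by (elim disjE conjE; metis reach_mono[OF _ s] uv reach_trans)
qed



lemma indep_mono: "graphic_indep A \<Longrightarrow> B \<subseteq> A \<Longrightarrow> graphic_indep B"
  unfolding graphic_indep_def
proof (intro allI impI notI)
  fix u v assume A: "\<forall>u v. {u, v} \<in> A \<longrightarrow> \<not> reach (A - {{u, v}}) u v" and B: "B \<subseteq> A"
    and uv: "{u,v} \<in> B" and r: "reach (B - {{u, v}}) u v"
  have "B - {{u,v}} \<subseteq> A - {{u,v}}" using B by blast
  then have "reach (A - {{u, v}}) u v" using reach_mono[OF r] by blast
  then show False using A uv B by blast
qed

lemma indep_insert:
  assumes ind: "graphic_indep A" and nr: "\<not> reach A u v"
  shows "graphic_indep (insert {u,v} A)"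
  unfolding graphic_indep_def
proof (intro allI impI notI)
  fix p q
  assume pq: "{p,q} \<in> insert {u,v} A" and r: "reach (insert {u,v} A - {{p,q}}) p q"
  show False
  proof (cases "{p,q} = {u,v}")
    case True
    have "insert {u,v} A - {{p,q}} \<subseteq> A" using True by blast
    then have "reach A p q" using r reach_mono by metis
    moreover have "(p = u \<and> q = v) \<or> (p = v \<and> q = u)" using True by (auto simp: doubleton_eq_iff)
    ultimately show False using nr reach_sym by metis
  next
    case False
    then have pqA: "{p,q} \<in> A" using pq by blast
    have eq: "insert {u,v} A - {{p,q}} = insert {u,v} (A - {{p,q}})" using False by blast
    have r2: "reach (A - {{p,q}}) p q \<or> (reach (A - {{p,q}}) p u \<and> reach (A - {{p,q}}) v q) \<or>
        (reach (A - {{p,q}}) p v \<and> reach (A - {{p,q}}) u q)"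
      using reach_insert[of u v "A - {{p,q}}" p q] r eq by simp
    have sub: "A - {{p,q}} \<subseteq> A" by blast
    have pqr: "reach A p q" using pqA by (rule reach_step)
    from r2 show False
    proof (elim disjE conjE)
      assume "reach (A - {{p,q}}) p q"
      then show False using ind pqA unfolding graphic_indep_def by blast
    next
      assume a: "reach (A - {{p,q}}) p u" "reach (A - {{p,q}}) v q"
      have "reach A u p" using reach_sym[OF reach_mono[OF a(1) sub]] .
      moreover have "reach A q v" using reach_sym[OF reach_mono[OF a(2) sub]] .
      ultimately have "reach A u v" using pqr reach_trans by metis
      then show False using nr by simp
    next
      assume a: "reach (A - {{p,q}}) p v" "reach (A - {{p,q}}) u q"
      have "reach A v p" using reach_sym[OF reach_mono[OF a(1) sub]] .
      moreover have "reach A q u" using reach_sym[OF reach_mono[OF a(2) sub]] .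
      ultimately have "reach A v u" using pqr reach_trans by metis
      then show False using nr reach_sym[of A v u] by simp
    qed
  qed
qed

lemma dep_insert: "graphic_indep A \<Longrightarrow> \<not> graphic_indep (insert {u,v} A) \<Longrightarrow> reach A u v"
  using indep_insert by metis

lemma indep_insert_isolated:
  assumes "graphic_indep A" "u \<notin> \<Union>A" "u \<noteq> v"
  shows "graphic_indep (insert {u,v} A)"
proof -
  have "\<not> reach A u v"
  proof
    assume "reach A u v"
    then have "u = v \<or> (u \<in> \<Union>A \<and> v \<in> \<Union>A)" by (rule reach_cases)
    then show False using assms(2,3) by simp
  qed
  then show ?thesis by (rule indep_insert[OF assms(1)])
qed

lemma reach_class_eq: "reach A x y \<Longrightarrow> Collect (reach A x) = Collect (reach A y)"
  using reach_trans reach_sym by (metis (mono_tags, opaque_lifting) Collect_cong)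

definition comps :: "'a set set \<Rightarrow> 'a set \<Rightarrow> 'a set set" where
  "comps A V0 = (\<lambda>x. Collect (reach A x)) ` V0"

lemma indep_insert_nreach:
  assumes "graphic_indep (insert {u,v} A)" "{u,v} \<notin> A"
  shows "\<not> reach A u v"
proof -
  have "insert {u,v} A - {{u,v}} = A" using assms(2) by blast
  then show ?thesis using assms(1) unfolding graphic_indep_def by force
qed

lemma comps_insert:
  assumes nr: "\<not> reach A u v" and uV: "u \<in> V0" and vV: "v \<in> V0"
  shows "comps (insert {u,v} A) V0 =
     insert (Collect (reach A u) \<union> Collect (reach A v)) (comps A V0 - {Collect (reach A u), Collect (reach A v)})"
    (is "?L = insert ?U (?S - {?Cu, ?Cv})")
proof (rule set_eqI)
  fix X
  show "X \<in> ?L \<longleftrightarrow> X \<in> insert ?U (?S - {?Cu, ?Cv})"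
  proof
    assume "X \<in> ?L"
    then obtain x where x: "x \<in> V0" "X = Collect (reach (insert {u,v} A) x)" unfolding comps_def by blast
    have X: "X = {y. reach A x y \<or> (reach A x u \<and> reach A v y) \<or> (reach A x v \<and> reach A u y)}"
      using x(2) by (simp add: set_eq_iff reach_insert_iff)
    show "X \<in> insert ?U (?S - {?Cu, ?Cv})"
    proof (cases "reach A x u")
      case True
      then have "Collect (reach A x) = ?Cu" by (rule reach_class_eq)
      then have "X = ?U" using X True by auto
      then show ?thesis by simp
    next
      case F1: False
      show ?thesis
      proof (cases "reach A x v")
        case True
        then have "Collect (reach A x) = ?Cv" by (rule reach_class_eq)
        then have "X = ?U" using X True F1 by auto
        then show ?thesis by simp
      next
        case False
        then have "X = Collect (reach A x)" using X F1 by auto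
        moreover have "Collect (reach A x) \<noteq> ?Cu" using F1 reach_sym
          by (metis mem_Collect_eq reach_refl)
        moreover have "Collect (reach A x) \<noteq> ?Cv" using False reach_sym
          by (metis mem_Collect_eq reach_refl)
        ultimately show ?thesis using x(1) unfolding comps_def by blast
      qed
    qed
  next
    assume "X \<in> insert ?U (?S - {?Cu, ?Cv})"
    then show "X \<in> ?L"
    proof
      assume "X = ?U"
      then have "X = Collect (reach (insert {u,v} A) u)"
        using reach_insert_iff[of u v A u] nr by auto
      then show ?thesis using uV unfolding comps_def by blast
    next
      assume "X \<in> ?S - {?Cu, ?Cv}"
      then obtain z where z: "z \<in> V0" "X = Collect (reach A z)" "X \<noteq> ?Cu" "X \<noteq> ?Cv"
        unfolding comps_def by blast
      have "\<not> reach A z u" using z reach_class_eq by metis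
      moreover have "\<not> reach A z v" using z reach_class_eq by metis
      ultimately have "X = Collect (reach (insert {u,v} A) z)"
        using z(2) reach_insert_iff[of u v A z] by auto
      then show ?thesis using z(1) unfolding comps_def by blast
    qed
  qed
qed

lemma forest_count:
  assumes "finite A" "graphic_indep A" "\<forall>e\<in>A. card e = 2" "\<Union>A \<subseteq> V0" "finite V0"
  shows "card A + card (comps A V0) = card V0"
  using assms
proof (induction A rule: finite_induct)
  case empty
  have h: "(\<lambda>u v. False)\<^sup>*\<^sup>* x y = (x = y)" for x y :: 'a
    by (auto elim: rtranclp.cases)
  have h2: "Collect ((\<lambda>u v. False)\<^sup>*\<^sup>* x) = {x}" for x :: 'a
    by (auto simp: h)
  have "comps {} V0 = (\<lambda>x. {x}) ` V0"
    unfolding comps_def reach_def by (simp add: h2)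
  moreover have "card ((\<lambda>x. {x}) ` V0) = card V0"
    by (rule card_image) (simp add: inj_on_def)
  ultimately show ?case by simp
next
  case (insert e A)
  obtain u v where e: "e = {u,v}" "u \<noteq> v" using insert.prems(2) card_2_iff by (metis insertCI)
  have indA: "graphic_indep A" using indep_mono[OF insert.prems(1)] by blast
  have IH: "card A + card (comps A V0) = card V0" using insert indA by simp
  have nr: "\<not> reach A u v" using indep_insert_nreach[of u v A] insert.prems(1) insert.hyps(2) e(1) by simp
  have uV: "u \<in> V0" "v \<in> V0" using insert.prems(3) e by auto
  let ?Cu = "Collect (reach A u)" and ?Cv = "Collect (reach A v)"
  have fin: "finite (comps A V0)" unfolding comps_def using insert.prems(4) by simp
  have inS: "?Cu \<in> comps A V0" "?Cv \<in> comps A V0" using uV unfolding comps_def by auto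
  have neq: "?Cu \<noteq> ?Cv" using nr by (metis mem_Collect_eq reach_refl)
  have notin: "?Cu \<union> ?Cv \<notin> comps A V0 - {?Cu, ?Cv}"
  proof
    assume "?Cu \<union> ?Cv \<in> comps A V0 - {?Cu, ?Cv}"
    then obtain z where z: "?Cu \<union> ?Cv = Collect (reach A z)" "Collect (reach A z) \<noteq> ?Cu"
      unfolding comps_def by blast
    have "reach A z u" using z(1) by (metis UnI1 mem_Collect_eq reach_refl)
    then show False using z(2) reach_class_eq by metis
  qed
  have c1: "card (comps A V0 - {?Cu, ?Cv}) = card (comps A V0) - 2"
    using fin inS neq by (simp add: card_Diff_subset)
  have c2: "card (comps A V0) \<ge> 2"
  proof -
    have "{?Cu, ?Cv} \<subseteq> comps A V0" using inS by blast
    then have "card {?Cu, ?Cv} \<le> card (comps A V0)" using fin card_mono by blast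
    then show ?thesis using neq by simp
  qed
  have "card (comps (insert e A) V0) = card (comps A V0) - 1"
    unfolding e(1) comps_insert[OF nr uV] using notin c1 c2 fin by simp
  then show ?case using IH insert.hyps c2 by simp
qed

lemma spanning_forest_card:
  assumes "finite A" "graphic_indep A" "\<forall>e\<in>A. card e = 2" "\<Union>A \<subseteq> V0" "finite V0"
    and conn: "\<forall>x\<in>V0. \<forall>y\<in>V0. reach A x y" and ne: "x0 \<in> V0"
  shows "card A = card V0 - 1"
proof -
  have "comps A V0 = {V0}"
  proof -
    have "Collect (reach A x) = V0" if "x \<in> V0" for x
    proof
      show "Collect (reach A x) \<subseteq> V0"
      proof
        fix y assume "y \<in> Collect (reach A x)"
        then have "x = y \<or> (x \<in> \<Union>A \<and> y \<in> \<Union>A)" using reach_cases by simp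
        then show "y \<in> V0" using assms(4) that by blast
      qed
      show "V0 \<subseteq> Collect (reach A x)" using conn that by blast
    qed
    then show ?thesis unfolding comps_def using ne by auto
  qed
  then show ?thesis using forest_count[OF assms(1-5)] by simp
qed



lemma reach_lift:
  assumes "reach S x y" "\<And>a b. {a,b} \<in> S \<Longrightarrow> reach T a b"
  shows "reach T x y"
  using assms(1) unfolding reach_def[of S]
proof (induction rule: rtranclp_induct)
  case base then show ?case by simp
next
  case (step y z)
  then show ?case using assms(2) reach_trans by metis
qed

lemma simple_finite_E: "simple_graph V E \<Longrightarrow> finite E"
  unfolding simple_graph_def by (meson Pow_iff finite_Pow_iff rev_finite_subset subsetI)

lemma card2_obtain: "card e = 2 \<Longrightarrow> (\<And>u v. e = {u,v} \<Longrightarrow> u \<noteq> v \<Longrightarrow> P) \<Longrightarrow> P"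
  by (metis card_2_iff)

lemma maximal_extension:
  assumes "finite S" "graphic_indep I0" "I0 \<subseteq> S"
  shows "\<exists>B. I0 \<subseteq> B \<and> B \<subseteq> S \<and> graphic_indep B \<and> (\<forall>e\<in>S-B. \<not> graphic_indep (insert e B))"
proof -
  let ?F = "{B. I0 \<subseteq> B \<and> B \<subseteq> S \<and> graphic_indep B}"
  have fin: "finite ?F" using assms(1) by (rule rev_finite_subset[OF finite_Pow_iff[THEN iffD2]]) auto
  have ne: "?F \<noteq> {}" using assms by blast
  obtain m where m: "m \<in> ?F" "\<forall>b\<in>?F. m \<le> b \<longrightarrow> m = b" using finite_has_maximal[OF fin ne] by blast
  have "\<forall>e\<in>S-m. \<not> graphic_indep (insert e m)"
  proof (intro ballI notI)
    fix e assume e: "e \<in> S - m" "graphic_indep (insert e m)"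
    then have i: "insert e m \<in> ?F" using m(1) by blast
    have "m \<le> insert e m" by blast
    then have "m = insert e m" using m(2) i by simp
    then show False using e by blast
  qed
  then show ?thesis using m(1) by blast
qed

lemma span_of_maximal:
  assumes "\<forall>e\<in>S. card e = 2" "B \<subseteq> S" "graphic_indep B"
    "\<forall>e\<in>S-B. \<not> graphic_indep (insert e B)" "reach S x y"
  shows "reach B x y"
  using assms(5)
proof (rule reach_lift)
  fix a b assume ab: "{a,b} \<in> S"
  show "reach B a b"
  proof (cases "{a,b} \<in> B")
    case True then show ?thesis by (rule reach_step)
  next
    case False
    then have "\<not> graphic_indep (insert {a,b} B)" using assms(4) ab by blast
    then show ?thesis using dep_insert[OF assms(3)] by blast
  qed
qed

lemma spanning_is_basis:
  assumes "\<forall>e\<in>E. card e = 2 \<and> e \<subseteq> V" "B \<subseteq> E" "graphic_indep B" "\<forall>x\<in>V. \<forall>y\<in>V. reach B x y"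
  shows "m_basis E graphic_indep B"
  unfolding m_basis_def
proof (intro conjI ballI notI)
  show "B \<subseteq> E" "graphic_indep B" using assms by auto
  fix e assume e: "e \<in> E - B" "graphic_indep (insert e B)"
  obtain p q where pq: "e = {p,q}" using assms(1) e(1) card2_obtain by (metis DiffD1)
  have "p \<in> V" "q \<in> V" using assms(1) e(1) pq by auto
  then have r: "reach B p q" using assms(4) by blast
  have "insert e B - {{p,q}} = B" using e(1) pq by blast
  then have "reach (insert e B - {{p,q}}) p q" using r by simp
  moreover have "{p,q} \<in> insert e B" using pq by simp
  ultimately show False using e(2) unfolding graphic_indep_def by blast
qed

lemma basis_card:
  assumes sg: "simple_graph V E" and conn: "graph_connected V E" and x0: "x0 \<in> V"
    and B: "m_basis E graphic_indep B"
  shows "card B = card V - 1"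
proof -
  have BE: "B \<subseteq> E" "graphic_indep B" "\<forall>e\<in>E-B. \<not> graphic_indep (insert e B)"
    using B unfolding m_basis_def by auto
  have E2: "\<forall>e\<in>E. card e = 2" "\<forall>e\<in>E. e \<subseteq> V" "finite V" using sg unfolding simple_graph_def by auto
  have "finite B" using simple_finite_E[OF sg] BE(1) finite_subset by blast
  moreover have "\<forall>e\<in>B. card e = 2" using E2 BE by blast
  moreover have "\<Union>B \<subseteq> V" using E2 BE by blast
  moreover have "\<forall>x\<in>V. \<forall>y\<in>V. reach B x y"
    using conn span_of_maximal[OF E2(1) BE] unfolding graph_connected_def by blast
  ultimately show ?thesis using spanning_forest_card[OF _ BE(2) _ _ E2(3) _ x0] by blast
qed



lemma reach_avoid:
  assumes "reach S a x" "a \<noteq> v" "\<forall>e\<in>S. v \<notin> e"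
  shows "x \<noteq> v"
proof
  assume "x = v"
  then have "a = v \<or> (a \<in> \<Union>S \<and> v \<in> \<Union>S)" using reach_cases assms(1) by metis
  then show False using assms(2,3) by blast
qed

lemma exists_edge_to:
  assumes conn: "\<forall>x\<in>W. \<forall>y\<in>W. reach F x y" and v: "v \<in> W" and c: "c \<in> W" "c \<noteq> v"
  shows "\<exists>c1. reach {e\<in>F. v \<notin> e} c c1 \<and> {v,c1} \<in> F"
proof (rule ccontr)
  let ?Fv = "{e\<in>F. v \<notin> e}"
  let ?A = "Collect (reach ?Fv c)"
  assume nex: "\<not> (\<exists>c1. reach ?Fv c c1 \<and> {v,c1} \<in> F)"
  have av: "\<forall>e\<in>?Fv. v \<notin> e" by simp
  have vA: "v \<notin> ?A"
  proof
    assume "v \<in> ?A"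
    then have "reach ?Fv c v" by simp
    from reach_avoid[OF this c(2) av] show False by simp
  qed
  have cl: "q \<in> ?A" if "{p,q} \<in> F" "p \<in> ?A" for p q
  proof (cases "v \<in> {p,q}")
    case True
    then have "q = v" using that vA by auto
    then have "{v,p} \<in> F" using that(1) by (simp add: insert_commute)
    then show ?thesis using nex that(2) by auto
  next
    case False
    then have "{p,q} \<in> ?Fv" using that(1) by simp
    moreover have "reach ?Fv c p" using that(2) by simp
    ultimately have "reach ?Fv c q" using reach_edge_trans by metis
    then show ?thesis by simp
  qed
  have "reach F c v" using conn c v by blast
  then have "v \<in> ?A" using reach_closed[of F c v ?A] cl by simp
  then show False using vA by simp
qed

lemma circuit_proper_indep: "m_circuit E indep C \<Longrightarrow> X \<subset> C \<Longrightarrow> indep X"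
  unfolding m_circuit_def by blast

lemma no_cut_vertex:
  assumes F2: "\<forall>e\<in>F. card e = 2"
    and conn: "\<forall>x\<in>W. \<forall>y\<in>W. reach F x y"
    and v: "v \<in> W" and a: "a \<in> W" "a \<noteq> v" and b: "b \<in> W" "b \<noteq> v"
    and nr: "\<not> reach {e\<in>F. v \<notin> e} a b"
    and rc: "\<forall>e\<in>F. \<forall>f\<in>F. e \<noteq> f \<longrightarrow> (\<exists>C. m_circuit E graphic_indep C \<and> C \<subseteq> F \<and> e \<in> C \<and> f \<in> C)"
  shows False
proof -
  let ?Fv = "{e\<in>F. v \<notin> e}"
  define A where "A = Collect (reach ?Fv a)"
  have av: "\<forall>e\<in>?Fv. v \<notin> e" by simp
  have vA: "v \<notin> A"
  proof
    assume "v \<in> A"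
    then have "reach ?Fv a v" unfolding A_def by simp
    from reach_avoid[OF this a(2) av] show False by simp
  qed
  have clA: "q \<in> A" if "{p,q} \<in> ?Fv" "p \<in> A" for p q
  proof -
    have "reach ?Fv a p" using that(2) unfolding A_def by simp
    then have "reach ?Fv a q" using reach_edge_trans that(1) by metis
    then show ?thesis unfolding A_def by simp
  qed
  obtain a1 where a1: "reach ?Fv a a1" "{v,a1} \<in> F" using exists_edge_to[OF conn v a] by blast
  obtain b1 where b1: "reach ?Fv b b1" "{v,b1} \<in> F" using exists_edge_to[OF conn v b] by blast
  have a1A: "a1 \<in> A" using a1 unfolding A_def by simp
  have b1A: "b1 \<notin> A"
  proof
    assume "b1 \<in> A"
    then have "reach ?Fv a b1" unfolding A_def by simp
    then have "reach ?Fv a b" using reach_trans[OF _ reach_sym[OF b1(1)]] by blast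
    then show False using nr by simp
  qed
  have b1v: "b1 \<noteq> v" using reach_avoid[OF b1(1) b(2) av] by simp
  have a1v: "a1 \<noteq> v" using a1A vA by blast
  have ne: "{v,a1} \<noteq> {v,b1}" using a1A b1A by (auto simp: doubleton_eq_iff)
  obtain C where C: "m_circuit E graphic_indep C" "C \<subseteq> F" "{v,a1} \<in> C" "{v,b1} \<in> C"
    using rc[rule_format, OF a1(2) b1(2) ne] by blast
  define X where "X = {e\<in>C. e \<subseteq> insert v A}"
  define Y where "Y = C - X"
  have nX: "{v,b1} \<notin> X" unfolding X_def using b1A b1v by auto
  have XC: "X \<subset> C"
  proof (rule psubsetI)
    show "X \<subseteq> C" unfolding X_def by blast
    show "X \<noteq> C" using nX C(4) by blast
  qed
  have inX: "{v,a1} \<in> X" unfolding X_def using a1A C(3) by auto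
  have YC: "Y \<subset> C"
  proof (rule psubsetI)
    show "Y \<subseteq> C" unfolding Y_def by blast
    show "Y \<noteq> C" using inX C(3) unfolding Y_def by blast
  qed
  have indX: "graphic_indep X" using circuit_proper_indep[OF C(1) XC] .
  have indY: "graphic_indep Y" using circuit_proper_indep[OF C(1) YC] .
  have Yprop: "x \<notin> A" if "{x,y} \<in> Y" for x y
  proof
    assume xA: "x \<in> A"
    have xy: "{x,y} \<in> C" "\<not> {x,y} \<subseteq> insert v A" using that unfolding Y_def X_def by auto
    then have yA: "y \<notin> insert v A" using xA by auto
    have "x \<noteq> v" using xA vA by blast
    then have "{x,y} \<in> ?Fv" using xy(1) C(2) yA by auto
    then have "y \<in> A" using clA xA by blast
    then show False using yA by blast
  qed
  have Yprop2: "y \<notin> A" if "{x,y} \<in> Y" for x y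
    using Yprop[of y x] that by (simp add: insert_commute)
  have Xprop: "x \<in> insert v A \<and> y \<in> insert v A" if "{x,y} \<in> X" for x y
    using that unfolding X_def by auto
  have "\<not> graphic_indep C" using C(1) unfolding m_circuit_def by blast
  then obtain p q where pq: "{p,q} \<in> C" "reach (C - {{p,q}}) p q" unfolding graphic_indep_def by blast
  show False
  proof (cases "{p,q} \<in> X")
    case True
    define \<pi> where "\<pi> = (\<lambda>z. if z \<in> A then z else v)"
    have "reach (X - {{p,q}}) (\<pi> p) (\<pi> q)"
    proof (rule reach_map[OF pq(2)])
      fix c d assume cd: "{c,d} \<in> C - {{p,q}}"
      show "\<pi> c = \<pi> d \<or> {\<pi> c, \<pi> d} \<in> X - {{p,q}}"
      proof (cases "{c,d} \<in> X")
        case True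
        then have "\<pi> c = c" "\<pi> d = d" using Xprop[OF True] unfolding \<pi>_def by auto
        then show ?thesis using True cd by auto
      next
        case False
        then have "{c,d} \<in> Y" using cd unfolding Y_def by blast
        then show ?thesis using Yprop Yprop2 unfolding \<pi>_def by metis
      qed
    qed
    moreover have "\<pi> p = p" "\<pi> q = q" using Xprop[OF True] unfolding \<pi>_def by auto
    ultimately show False using indX True unfolding graphic_indep_def by metis
  next
    case False
    then have pqY: "{p,q} \<in> Y" using pq(1) unfolding Y_def by blast
    define \<pi> where "\<pi> = (\<lambda>z. if z \<in> A then v else z)"
    have "reach (Y - {{p,q}}) (\<pi> p) (\<pi> q)"
    proof (rule reach_map[OF pq(2)])
      fix c d assume cd: "{c,d} \<in> C - {{p,q}}"
      show "\<pi> c = \<pi> d \<or> {\<pi> c, \<pi> d} \<in> Y - {{p,q}}"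
      proof (cases "{c,d} \<in> X")
        case True
        then have "\<pi> c = v" "\<pi> d = v" using Xprop[OF True] vA unfolding \<pi>_def by auto
        then show ?thesis by simp
      next
        case False
        then have Y: "{c,d} \<in> Y" using cd unfolding Y_def by blast
        then have "\<pi> c = c" "\<pi> d = d" using Yprop[OF Y] Yprop2[OF Y] unfolding \<pi>_def by auto
        then show ?thesis using Y cd by auto
      qed
    qed
    moreover have "\<pi> p = p" "\<pi> q = q" using Yprop[OF pqY] Yprop2[OF pqY] unfolding \<pi>_def by auto
    ultimately show False using indY pqY unfolding graphic_indep_def by metis
  qed
qed

lemma Gw_biconnected:
  assumes sg: "simple_graph V E" and bc: "biconnected V E" and w: "w \<in> V"
    and Fne: "{e\<in>E. w \<notin> e} \<noteq> {}"
    and rc: "restriction_connected E graphic_indep {e\<in>E. w \<notin> e}"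
  shows "biconnected (V - {w}) {e\<in>E. w \<notin> e}"
proof -
  let ?F = "{e\<in>E. w \<notin> e}" and ?W = "V - {w}"
  have E2: "\<forall>e\<in>E. card e = 2 \<and> e \<subseteq> V" "finite V" using sg unfolding simple_graph_def by auto
  obtain e0 where e0: "e0 \<in> ?F" using Fne by blast
  have "e0 \<subseteq> ?W" using e0 E2 by auto
  then have "card e0 \<le> card ?W" using E2(2) card_mono by blast
  then have c2: "card ?W \<ge> 2" using e0 E2 by auto
  have conn: "graph_connected ?W ?F" using bc w unfolding biconnected_def by blast
  have "graph_connected (?W - {v}) {e\<in>?F. v \<notin> e}" if v: "v \<in> ?W" for v
    unfolding graph_connected_def
  proof (intro ballI, rule ccontr)
    fix a b assume ab: "a \<in> ?W - {v}" "b \<in> ?W - {v}" "\<not> reach {e\<in>?F. v \<notin> e} a b"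
    show False
      using no_cut_vertex[of ?F ?W v a b E] ab v conn E2 rc
      unfolding graph_connected_def restriction_connected_def by auto
  qed
  then show ?thesis using c2 conn unfolding biconnected_def by blast
qed



context
  fixes V :: "'a set" and E :: "'a set set" and w :: 'a
  assumes sg: "simple_graph V E" and bc: "biconnected V E" and wV: "w \<in> V"
    and Fne: "{e\<in>E. w \<notin> e} \<noteq> {}"
begin

lemma E2: "\<forall>e\<in>E. card e = 2 \<and> e \<subseteq> V" "finite V" "finite E"
  using sg simple_finite_E[OF sg] unfolding simple_graph_def by auto

lemma connV: "graph_connected V E" using bc unfolding biconnected_def by blast
lemma connW: "graph_connected (V - {w}) {e\<in>E. w \<notin> e}" using bc wV unfolding biconnected_def by blast

lemma cardV3: "card V \<ge> 3"
proof -
  obtain e0 where e0: "e0 \<in> E" "w \<notin> e0" using Fne by blast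
  have "e0 \<subseteq> V - {w}" using e0 E2 by auto
  then have "card e0 \<le> card (V - {w})" using E2(2) card_mono by blast
  then have "card (V - {w}) \<ge> 2" using e0 E2 by auto
  then show ?thesis using wV E2(2) by (simp add: card_Diff_singleton)
qed

lemma star_eq: "{e\<in>E. w \<in> e} = (\<lambda>x. {w,x}) ` {x. {w,x} \<in> E}"
proof (rule set_eqI, rule iffI)
  fix e assume e: "e \<in> {e\<in>E. w \<in> e}"
  then have "card e = 2" using E2 by blast
  then obtain u v where uv: "e = {u,v}" "u \<noteq> v" by (rule card2_obtain)
  then have "e = {w,u} \<or> e = {w,v}" using e by auto
  then show "e \<in> (\<lambda>x. {w,x}) ` {x. {w,x} \<in> E}" using e by auto
qed auto

lemma N_sub: "{x. {w,x} \<in> E} \<subseteq> V - {w}"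
proof
  fix x assume x: "x \<in> {x. {w,x} \<in> E}"
  then have "card {w,x} = 2" "{w,x} \<subseteq> V" using E2 by auto
  then show "x \<in> V - {w}" by (cases "x = w") auto
qed

lemma card_star: "card {e\<in>E. w \<in> e} = card {x. {w,x} \<in> E}"
  unfolding star_eq by (rule card_image) (auto simp: inj_on_def doubleton_eq_iff)

lemma finN: "finite {x. {w,x} \<in> E}" using N_sub E2(2) finite_subset by blast

lemma exists_nbr_other: "x \<in> V \<Longrightarrow> \<exists>y. {w,y} \<in> E \<and> y \<noteq> x"
proof -
  assume xV: "x \<in> V"
  have c2: "card {w,x} \<le> 2" by (simp add: card_insert_if)
  have "card (V - {w, x}) = card V - card {w,x}" using xV wV by (simp add: card_Diff_subset)
  then have "card (V - {w, x}) \<ge> 1" using c2 cardV3 by linarith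
  then have "V - {w,x} \<noteq> {}" by (metis card.empty not_one_le_zero)
  then obtain y where y: "y \<in> V" "y \<noteq> w" "y \<noteq> x" by blast
  let ?Ex = "{e\<in>E. x \<notin> e}"
  have g: "graph_connected (V - {x}) ?Ex" using bc xV unfolding biconnected_def by blast
  show ?thesis
  proof (cases "x = w")
    case True
    have "reach E w y" using connV wV y unfolding graph_connected_def by blast
    then have "w \<in> \<Union>E" using reach_cases y by metis
    then obtain e where e: "e \<in> E" "w \<in> e" by blast
    then have "e \<in> {e\<in>E. w \<in> e}" by simp
    then obtain z where "e = {w,z}" "{w,z} \<in> E" unfolding star_eq by blast
    moreover have "z \<noteq> w" using N_sub calculation(2) by blast
    ultimately show ?thesis using True by blast
  next
    case False
    have "reach ?Ex w y" using g wV y False unfolding graph_connected_def by blast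
    then have "w \<in> \<Union>?Ex" using reach_cases y by metis
    then obtain e where e: "e \<in> E" "w \<in> e" "x \<notin> e" by blast
    then have "e \<in> {e\<in>E. w \<in> e}" by simp
    then obtain z where "e = {w,z}" "{w,z} \<in> E" unfolding star_eq by blast
    then show ?thesis using e(3) by blast
  qed
qed

lemma basis_star_nonempty:
  assumes B: "m_basis E graphic_indep B"
  shows "B \<inter> {e\<in>E. w \<in> e} \<noteq> {}"
proof
  assume empty: "B \<inter> {e\<in>E. w \<in> e} = {}"
  obtain x1 where x1: "{w,x1} \<in> E" using exists_nbr_other[OF wV] by blast
  have x1w: "x1 \<noteq> w" using x1 N_sub by blast
  have BE: "B \<subseteq> E" "graphic_indep B" "\<forall>e\<in>E-B. \<not> graphic_indep (insert e B)"
    using B unfolding m_basis_def by auto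
  have nB: "{w,x1} \<notin> B" using empty x1 by blast
  have "w \<notin> \<Union>B" using empty BE(1) by blast
  then have "graphic_indep (insert {w,x1} B)" using indep_insert_isolated[OF BE(2)] x1w by metis
  then show False using BE(3) x1 nB by blast
qed

lemma basis_value:
  assumes B: "m_basis E graphic_indep B"
  shows "card (B \<inter> {e\<in>E. w \<notin> e}) = card V - 1 - card (B \<inter> {e\<in>E. w \<in> e})"
proof -
  have cB: "card B = card V - 1" using basis_card[OF sg connV wV B] .
  have BE: "B \<subseteq> E" using B unfolding m_basis_def by auto
  have fin: "finite B" using BE E2(3) finite_subset by blast
  have "B = (B \<inter> {e\<in>E. w \<notin> e}) \<union> (B \<inter> {e\<in>E. w \<in> e})" using BE by blast
  then have "card B = card (B \<inter> {e\<in>E. w \<notin> e}) + card (B \<inter> {e\<in>E. w \<in> e})"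
    using fin by (metis (no_types, lifting) card_Un_disjoint disjoint_iff finite_Int mem_Collect_eq IntE)
  then show ?thesis using cB by simp
qed

lemma reach_via_star:
  assumes s: "{w,x1} \<in> S" and x1: "x1 \<in> V - {w}" and FS: "{e\<in>E. w \<notin> e} \<subseteq> S"
  shows "\<forall>x\<in>V. \<forall>y\<in>V. reach S x y"
proof -
  have rw: "reach S w x" if "x \<in> V" for x
  proof (cases "x = w")
    case True then show ?thesis by simp
  next
    case False
    then have "reach {e\<in>E. w \<notin> e} x1 x" using connW x1 that unfolding graph_connected_def by blast
    then have "reach S x1 x" using reach_mono FS by metis
    moreover have "reach S w x1" using s by (rule reach_step)
    ultimately show ?thesis using reach_trans by metis
  qed
  show ?thesis
  proof (intro ballI)
    fix x y assume "x \<in> V" "y \<in> V"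
    then show "reach S x y" using rw reach_trans[OF reach_sym[OF rw[of x]] rw[of y]] by simp
  qed
qed

lemma basis_from:
  assumes I0: "graphic_indep I0" "I0 \<subseteq> {e\<in>E. w \<in> e}" and s: "{w,x1} \<in> I0"
  shows "\<exists>B. m_basis E graphic_indep B \<and> B \<inter> {e\<in>E. w \<in> e} = I0"
proof -
  let ?S = "I0 \<union> {e\<in>E. w \<notin> e}"
  have finS: "finite ?S" using I0(2) E2(3) by (simp add: finite_subset)
  obtain B where B: "I0 \<subseteq> B" "B \<subseteq> ?S" "graphic_indep B" "\<forall>e\<in>?S-B. \<not> graphic_indep (insert e B)"
    using maximal_extension[OF finS I0(1)] by blast
  have S2: "\<forall>e\<in>?S. card e = 2" using I0(2) E2 by blast
  have x1: "x1 \<in> V - {w}" using s I0(2) N_sub by blast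
  have cS: "\<forall>x\<in>V. \<forall>y\<in>V. reach ?S x y" using reach_via_star[of x1 ?S] s x1 by blast
  have cB: "\<forall>x\<in>V. \<forall>y\<in>V. reach B x y" using span_of_maximal[OF S2 B(2) B(3) B(4)] cS by blast
  have BE: "B \<subseteq> E" using B(2) I0(2) by blast
  have "m_basis E graphic_indep B" using spanning_is_basis[OF _ BE B(3) cB] E2 by blast
  moreover have "B \<inter> {e\<in>E. w \<in> e} = I0" using B(1,2) I0(2) by blast
  ultimately show ?thesis by blast
qed

lemma levels_bounds:
  assumes kl: "k_level E graphic_indep {e\<in>E. w \<notin> e} k"
  shows "2 \<le> k \<and> k \<le> card {x. {w,x} \<in> E}"
proof -
  let ?F = "{e\<in>E. w \<notin> e}" and ?St = "{e\<in>E. w \<in> e}" and ?N = "{x. {w,x} \<in> E}"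
  let ?Val = "{card (B \<inter> ?F) | B. m_basis E graphic_indep B}"
  have k: "k = card ?Val" using kl unfolding k_level_def by simp
  have sub: "?Val \<subseteq> (\<lambda>j. card V - 1 - j) ` {1..card ?N}"
  proof
    fix n assume "n \<in> ?Val"
    then obtain B where B: "m_basis E graphic_indep B" "n = card (B \<inter> ?F)" by blast
    have ne: "B \<inter> ?St \<noteq> {}" using basis_star_nonempty[OF B(1)] .
    have finSt: "finite ?St" using E2(3) by simp
    have "card (B \<inter> ?St) \<ge> 1" using ne finSt by (simp add: Suc_le_eq card_gt_0_iff)
    moreover have "card (B \<inter> ?St) \<le> card ?N" using card_star card_mono[OF finSt, of "B \<inter> ?St"] by simp
    ultimately show "n \<in> (\<lambda>j. card V - 1 - j) ` {1..card ?N}"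
      using B(2) basis_value[OF B(1)] by auto
  qed
  have finV: "finite ?Val" using sub finite_subset by blast
  have le: "k \<le> card ?N"
    using card_mono[OF _ sub] card_image_le[of "{1..card ?N}" "\<lambda>j. card V - 1 - j"] k by simp
  obtain x1 where x1: "{w,x1} \<in> E" using exists_nbr_other[OF wV] by blast
  have x1V: "x1 \<in> V" "x1 \<noteq> w" using x1 N_sub by auto
  obtain x2 where x2: "{w,x2} \<in> E" "x2 \<noteq> x1" using exists_nbr_other[OF x1V(1)] by blast
  have x2w: "x2 \<noteq> w" using x2 N_sub by blast
  have ind0: "graphic_indep {}" unfolding graphic_indep_def by simp
  have ind1: "graphic_indep {{w,x1}}"
    using indep_insert_isolated[OF ind0, of x1 w] x1V by (simp add: insert_commute)
  have ind2: "graphic_indep {{w,x1},{w,x2}}"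
  proof -
    have "x2 \<notin> \<Union>{{w,x1}}" using x2 x2w by auto
    then have "graphic_indep (insert {x2,w} {{w,x1}})" using indep_insert_isolated[OF ind1] x2w by metis
    then show ?thesis by (simp add: insert_commute)
  qed
  obtain B1 where B1: "m_basis E graphic_indep B1" "B1 \<inter> ?St = {{w,x1}}"
    using basis_from[OF ind1 _, of x1] x1 by auto
  obtain B2 where B2: "m_basis E graphic_indep B2" "B2 \<inter> ?St = {{w,x1},{w,x2}}"
    using basis_from[OF ind2 _, of x1] x1 x2 by auto
  have c2: "card {{w,x1},{w,x2}} = 2" using x2 by (auto simp: doubleton_eq_iff)
  have m1: "card (B1 \<inter> ?F) \<in> ?Val" using B1(1) by blast
  have e1: "card (B1 \<inter> ?F) = card V - 2" using basis_value[OF B1(1)] B1(2) by simp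
  have v1: "card V - 2 \<in> ?Val" using m1 e1 by simp
  have m2: "card (B2 \<inter> ?F) \<in> ?Val" using B2(1) by blast
  have e2: "card (B2 \<inter> ?F) = card V - 3" using basis_value[OF B2(1)] B2(2) c2 by simp
  have v2: "card V - 3 \<in> ?Val" using m2 e2 by simp
  have "card V - 2 \<noteq> card V - 3" using cardV3 by simp
  then have "card {card V - 2, card V - 3} = 2" by simp
  moreover have "{card V - 2, card V - 3} \<subseteq> ?Val" using v1 v2 by blast
  then have "card {card V - 2, card V - 3} \<le> card ?Val" by (rule card_mono[OF finV])
  ultimately have "2 \<le> k" using k by simp
  then show ?thesis using le by simp
qed

end



definition comp2 :: "'a set \<Rightarrow> 'a set set \<Rightarrow> 'a \<Rightarrow> 'a \<Rightarrow> 'a \<Rightarrow> 'a set" where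
  "comp2 W D x y a = {b \<in> W - {x,y}. reach {e\<in>D. x \<notin> e \<and> y \<notin> e} a b}"

lemma comp2_closed:
  assumes "\<forall>e\<in>D. e \<subseteq> W" "{p,q} \<in> D" "x \<notin> {p,q}" "y \<notin> {p,q}" "p \<in> comp2 W D x y a"
  shows "q \<in> comp2 W D x y a"
proof -
  have r: "reach {e\<in>D. x \<notin> e \<and> y \<notin> e} a p" using assms(5) unfolding comp2_def by simp
  have "{p,q} \<in> {e\<in>D. x \<notin> e \<and> y \<notin> e}" using assms(2,3,4) by simp
  then have "reach {e\<in>D. x \<notin> e \<and> y \<notin> e} a q" using reach_edge_trans[OF r] by blast
  moreover have "q \<in> W - {x,y}" using assms(1,2,3,4) by auto
  ultimately show ?thesis unfolding comp2_def by simp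
qed

lemma comp2_self: "a \<in> W - {x,y} \<Longrightarrow> a \<in> comp2 W D x y a"
  unfolding comp2_def by simp

lemma comp2_sub: "comp2 W D x y a \<subseteq> W - {x,y}"
  unfolding comp2_def by blast

lemma good_neighbor:
  assumes bic: "biconnected W D" and sg: "simple_graph W D" and xW: "x \<in> W" and c3: "card W \<ge> 3"
  shows "\<exists>y. {x,y} \<in> D \<and> graph_connected (W - {x,y}) {e\<in>D. x \<notin> e \<and> y \<notin> e}"
proof (rule ccontr)
  assume nex: "\<not> ?thesis"
  have DW: "\<forall>e\<in>D. e \<subseteq> W" and finW: "finite W" using sg unfolding simple_graph_def by auto
  have conn: "graph_connected W D" using bic unfolding biconnected_def by blast
  have connv: "\<And>v. v \<in> W \<Longrightarrow> graph_connected (W - {v}) {e\<in>D. v \<notin> e}"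
    using bic unfolding biconnected_def by blast
  define P where "P = (\<lambda>(y, C). {x,y} \<in> D \<and> (\<exists>a\<in>W - {x,y}. C = comp2 W D x y a) \<and> C \<noteq> W - {x,y})"
  obtain z where z: "z \<in> W" "z \<noteq> x"
  proof -
    have "card (W - {x}) = card W - 1" using finW xW by (simp add: card_Diff_singleton)
    then have "card (W - {x}) \<noteq> 0" using c3 by simp
    then have "W - {x} \<noteq> {}" by (metis card.empty)
    then show ?thesis using that by blast
  qed
  have "reach D x z" using conn xW z unfolding graph_connected_def by blast
  then have "x \<in> \<Union>D" using reach_cases z(2) by metis
  then obtain e0 where e0: "e0 \<in> D" "x \<in> e0" by blast
  have "card e0 = 2" using sg e0 unfolding simple_graph_def by blast
  then obtain y0 where y0: "{x,y0} \<in> D" "y0 \<noteq> x" using e0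
    by (metis card2_obtain insert_commute insert_iff singletonD)
  have "\<not> graph_connected (W - {x,y0}) {e\<in>D. x \<notin> e \<and> y0 \<notin> e}" using nex y0 by blast
  then obtain p q where pq: "p \<in> W - {x,y0}" "q \<in> W - {x,y0}" "\<not> reach {e\<in>D. x \<notin> e \<and> y0 \<notin> e} p q"
    unfolding graph_connected_def by blast
  have "q \<notin> comp2 W D x y0 p" using pq unfolding comp2_def by blast
  then have "P (y0, comp2 W D x y0 p)" unfolding P_def using y0 pq by blast
  then obtain yC where yC: "P yC" "\<forall>yC'. P yC' \<longrightarrow> card (snd yC) \<le> card (snd yC')"
    using ex_has_least_nat[of P _ "\<lambda>yC. card (snd yC)"] by blast
  obtain y C where yCd: "yC = (y, C)" by fastforce
  have Py: "{x,y} \<in> D" "C \<noteq> W - {x,y}" using yC(1) unfolding yCd P_def by auto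
  obtain a where a: "a \<in> W - {x,y}" "C = comp2 W D x y a" using yC(1) unfolding yCd P_def by auto
  have min: "card C \<le> card C'" if "P (y', C')" for y' C'
    using yC(2) that unfolding yCd by fastforce
  have cxy: "card {x,y} = 2" "{x,y} \<subseteq> W" using Py(1) sg unfolding simple_graph_def by auto
  have yW: "y \<in> W" "y \<noteq> x" using cxy(2) apply blast
    using cxy(1) by (cases "x = y") auto
  have CW: "C \<subseteq> W - {x,y}" using a comp2_sub by metis
  have finC: "finite C" using CW finW finite_subset by blast
  obtain y' where y': "y' \<in> C" "{x,y'} \<in> D"
  proof (rule ccontr)
    assume nn: "\<not> thesis"
    then have nn': "\<And>c. c \<in> C \<Longrightarrow> {x,c} \<notin> D" using that by blast
    obtain d where d: "d \<in> W - {x,y}" "d \<notin> C" using CW Py(2) by blast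
    have cl: "q \<in> C" if "{p,q} \<in> {e\<in>D. y \<notin> e}" "p \<in> C" for p q
    proof -
      have pxy: "p \<noteq> x" "p \<noteq> y" using that(2) CW by auto
      have qy: "q \<noteq> y" using that(1) by auto
      have qx: "q \<noteq> x"
      proof
        assume "q = x"
        then have "{x,p} \<in> D" using that(1) by (simp add: insert_commute)
        then show False using nn' that(2) by blast
      qed
      show ?thesis using comp2_closed[OF DW, of p q x y a] that pxy qx qy a(2) by auto
    qed
    have "reach {e\<in>D. y \<notin> e} a d" using connv[OF yW(1)] a d unfolding graph_connected_def by blast
    then have "d \<in> C" using reach_closed[of _ a d C] cl comp2_self[OF a(1)] a(2) by metis
    then show False using d by blast
  qed
  have y'xy: "y' \<noteq> x" "y' \<noteq> y" "y' \<in> W" using y' CW by auto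
  have "\<not> graph_connected (W - {x,y'}) {e\<in>D. x \<notin> e \<and> y' \<notin> e}" using nex y' by blast
  then obtain p' q' where pq': "p' \<in> W - {x,y'}" "q' \<in> W - {x,y'}" "\<not> reach {e\<in>D. x \<notin> e \<and> y' \<notin> e} p' q'"
    unfolding graph_connected_def by blast
  obtain a' where a': "a' \<in> W - {x,y'}" "y \<notin> comp2 W D x y' a'"
  proof (cases "y \<in> comp2 W D x y' p'")
    case True
    have "y \<notin> comp2 W D x y' q'"
    proof
      assume "y \<in> comp2 W D x y' q'"
      then have r1: "reach {e\<in>D. x \<notin> e \<and> y' \<notin> e} q' y" unfolding comp2_def by simp
      have r2: "reach {e\<in>D. x \<notin> e \<and> y' \<notin> e} p' y" using True unfolding comp2_def by simp
      show False using pq'(3) reach_trans[OF r2 reach_sym[OF r1]] by blast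
    qed
    then show ?thesis using that pq'(2) by blast
  next
    case False
    then show ?thesis using that pq'(1) by blast
  qed
  define C' where "C' = comp2 W D x y' a'"
  have C'W: "C' \<subseteq> W - {x,y'}" unfolding C'_def using comp2_sub by metis
  have yW': "y \<in> W - {x,y'}" using yW y'xy by auto
  have PC': "P (y', C')" unfolding P_def using y'(2) a' yW' C'_def by auto
  obtain c where c: "c \<in> C'" "{c,y'} \<in> D"
  proof (rule ccontr)
    assume nn: "\<not> thesis"
    then have nn': "\<And>c. c \<in> C' \<Longrightarrow> {c,y'} \<notin> D" using that by blast
    have cl: "q \<in> C'" if "{p,q} \<in> {e\<in>D. x \<notin> e}" "p \<in> C'" for p q
    proof -
      have pxy: "p \<noteq> x" "p \<noteq> y'" using that(2) C'W by auto
      have qx: "q \<noteq> x" using that(1) by auto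
      have qy: "q \<noteq> y'"
      proof
        assume "q = y'"
        then show False using nn' that by auto
      qed
      show ?thesis using comp2_closed[OF DW, of p q x y' a'] that pxy qx qy C'_def by auto
    qed
    have "reach {e\<in>D. x \<notin> e} a' y'" using connv[OF xW] a' y'xy unfolding graph_connected_def by blast
    then have "y' \<in> C'" using reach_closed[of _ a' y' C'] cl comp2_self[OF a'(1)] C'_def by metis
    then show False using C'W by blast
  qed
  have cC: "c \<in> C"
  proof -
    have "c \<noteq> y" using c(1) a'(2) C'_def by blast
    moreover have "c \<noteq> x" using c(1) C'W by blast
    ultimately show ?thesis using comp2_closed[OF DW, of y' c x y a] c(2) y'(1) y'xy a(2)
      by (simp add: insert_commute)
  qed
  have sub: "C' \<subseteq> C"
  proof
    fix b assume b: "b \<in> C'"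
    let ?D' = "{e\<in>D. x \<notin> e \<and> y' \<notin> e}"
    have r1: "reach ?D' a' c" "reach ?D' a' b" using b c(1) unfolding C'_def comp2_def by auto
    have r: "reach ?D' c b" using reach_trans[OF reach_sym[OF r1(1)] r1(2)] .
    have clC': "q \<in> C'" if "{p,q} \<in> ?D'" "p \<in> C'" for p q
      using comp2_closed[OF DW, of p q x y' a'] that C'_def by auto
    have "reach {e\<in>?D'. e \<subseteq> C'} c b" using reach_restrict[OF r c(1)] clC' by blast
    moreover have "{e\<in>?D'. e \<subseteq> C'} \<subseteq> {e\<in>D. x \<notin> e \<and> y \<notin> e}" using a'(2) C'_def by blast
    ultimately have rcb: "reach {e\<in>D. x \<notin> e \<and> y \<notin> e} c b" by (rule reach_mono)
    have rac: "reach {e\<in>D. x \<notin> e \<and> y \<notin> e} a c" using cC a(2) unfolding comp2_def by simp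
    have "reach {e\<in>D. x \<notin> e \<and> y \<notin> e} a b" using reach_trans[OF rac rcb] .
    moreover have "b \<in> W - {x,y}" using b C'W a'(2) C'_def by auto
    ultimately show "b \<in> C" using a(2) unfolding comp2_def by simp
  qed
  have "y' \<notin> C'" using C'W by blast
  then have "C' \<subset> C" using sub y'(1) by blast
  then have "card C' < card C" using finC psubset_card_mono by blast
  then show False using min[OF PC'] by simp
qed



definition cf :: "'a \<Rightarrow> 'a \<Rightarrow> 'a \<Rightarrow> 'a" where
  "cf x y z = (if z = x then y else z)"

definition contr :: "'a set set \<Rightarrow> 'a \<Rightarrow> 'a \<Rightarrow> 'a set set" where
  "contr D x y = (image (cf x y)) ` (D - {{x,y}})"

lemma cf_id: "x \<notin> e \<Longrightarrow> cf x y ` e = e"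
  unfolding cf_def by (auto simp: image_def) 

lemma contr_edge_cases:
  assumes "card e = 2" "e \<noteq> {x,y}"
  shows "(x \<notin> e \<and> cf x y ` e = e) \<or> (\<exists>q. e = {x,q} \<and> q \<noteq> x \<and> q \<noteq> y \<and> cf x y ` e = {y,q})"
proof (cases "x \<in> e")
  case False then show ?thesis using cf_id by metis
next
  case True
  obtain u v where uv: "e = {u,v}" "u \<noteq> v" using assms(1) by (rule card2_obtain)
  then obtain q where q: "e = {x,q}" "q \<noteq> x" using True by (auto simp: insert_commute)
  have "q \<noteq> y" using q assms(2) by blast
  moreover have "cf x y ` e = {y,q}" using q unfolding cf_def by auto
  ultimately show ?thesis using q by blast
qed

lemma contr_mem: "{a,b} \<in> D \<Longrightarrow> {a,b} \<noteq> {x,y} \<Longrightarrow> {cf x y a, cf x y b} \<in> contr D x y"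
  unfolding contr_def by (metis (no_types, lifting) DiffI image_empty image_eqI image_insert singletonD)

lemma contr_map:
  assumes "{a,b} \<in> D" "x \<noteq> y"
  shows "cf x y a = cf x y b \<or> {cf x y a, cf x y b} \<in> contr D x y"
proof (cases "{a,b} = {x,y}")
  case True
  then have "cf x y a = y" "cf x y b = y" unfolding cf_def by (auto simp: doubleton_eq_iff)
  then show ?thesis by simp
next
  case False then show ?thesis using contr_mem assms(1) by metis
qed

lemma contract_bic:
  assumes sg: "simple_graph W D" and bic: "biconnected W D" and xy: "{x,y} \<in> D" and c3: "card W \<ge> 3"
    and gc: "graph_connected (W - {x,y}) {e\<in>D. x \<notin> e \<and> y \<notin> e}"
  shows "simple_graph (W - {x}) (contr D x y) \<and> biconnected (W - {x}) (contr D x y)"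
proof -
  have DW: "\<forall>e\<in>D. e \<subseteq> W \<and> card e = 2" and finW: "finite W" using sg unfolding simple_graph_def by auto
  have cxy: "card {x,y} = 2" "{x,y} \<subseteq> W" using xy DW by auto
  have xny: "x \<noteq> y" using cxy(1) by (cases "x = y") auto
  have xW: "x \<in> W" "y \<in> W" using cxy by auto
  have fxW: "cf x y z \<in> W - {x}" if "z \<in> W" for z using that xW xny unfolding cf_def by auto
  have fix': "cf x y z = z" if "z \<noteq> x" for z using that unfolding cf_def by simp
  have simple: "simple_graph (W - {x}) (contr D x y)"
    unfolding simple_graph_def
  proof (intro conjI ballI)
    show "finite (W - {x})" using finW by simp
    fix e' assume "e' \<in> contr D x y"
    then obtain e where e: "e \<in> D" "e \<noteq> {x,y}" "e' = cf x y ` e" unfolding contr_def by blast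
    have "card e = 2" using DW e by blast
    from contr_edge_cases[OF this e(2)] show "card e' = 2"
    proof (elim disjE exE conjE)
      assume "x \<notin> e" "cf x y ` e = e" then show ?thesis using DW e by simp
    next
      fix q assume "e = {x,q}" "q \<noteq> x" "q \<noteq> y" "cf x y ` e = {y,q}"
      then show ?thesis using e by simp
    qed
    have "e \<subseteq> W" using DW e(1) by blast
    then have "cf x y ` e \<subseteq> W - {x}"
    proof -
      assume eW: "e \<subseteq> W"
      show ?thesis
      proof
        fix t assume "t \<in> cf x y ` e"
        then obtain z where z: "z \<in> e" "t = cf x y z" by blast
        have "z \<in> W" using z(1) eW by blast
        then show "t \<in> W - {x}" using fxW z(2) by simp
      qed
    qed
    then show "e' \<subseteq> W - {x}" using e(3) by simp
  qed
  have c2: "card (W - {x}) \<ge> 2" using c3 finW xW by (simp add: card_Diff_singleton)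
  have conn: "graph_connected (W - {x}) (contr D x y)"
    unfolding graph_connected_def
  proof (intro ballI)
    fix p q assume pq: "p \<in> W - {x}" "q \<in> W - {x}"
    have "reach D p q" using bic pq unfolding biconnected_def graph_connected_def by blast
    then have "reach (contr D x y) (cf x y p) (cf x y q)"
      using reach_map contr_map[OF _ xny] by metis
    then show "reach (contr D x y) p q" using fix' pq by simp
  qed
  have rem: "graph_connected (W - {x} - {z}) {e\<in>contr D x y. z \<notin> e}" if z: "z \<in> W - {x}" for z
  proof (cases "z = y")
    case True
    have sub: "{e\<in>D. x \<notin> e \<and> y \<notin> e} \<subseteq> {e\<in>contr D x y. z \<notin> e}"
    proof
      fix e assume e: "e \<in> {e\<in>D. x \<notin> e \<and> y \<notin> e}"
      then have "e \<noteq> {x,y}" by blast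
      moreover have ce: "cf x y ` e = e" using e cf_id[of x e y] by simp
      ultimately have eD: "e \<in> D - {{x,y}}" using e by simp
      have "e \<in> contr D x y" unfolding contr_def
        by (rule image_eqI[where x=e]) (use ce eD in auto)
      then show "e \<in> {e\<in>contr D x y. z \<notin> e}" using e True by simp
    qed
    have eqW: "W - {x} - {z} = W - {x,y}" using True by blast
    show ?thesis unfolding graph_connected_def eqW
    proof (intro ballI)
      fix p q assume "p \<in> W - {x,y}" "q \<in> W - {x,y}"
      then have "reach {e\<in>D. x \<notin> e \<and> y \<notin> e} p q" using gc unfolding graph_connected_def by blast
      then show "reach {e\<in>contr D x y. z \<notin> e} p q" using reach_mono[OF _ sub] by blast
    qed
  next
    case False
    show ?thesis unfolding graph_connected_def
    proof (intro ballI)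
      fix p q assume pq: "p \<in> W - {x} - {z}" "q \<in> W - {x} - {z}"
      have r: "reach {e\<in>D. z \<notin> e} p q" using bic pq z unfolding biconnected_def graph_connected_def by blast
      have m: "cf x y a = cf x y b \<or> {cf x y a, cf x y b} \<in> {e\<in>contr D x y. z \<notin> e}"
        if "{a,b} \<in> {e\<in>D. z \<notin> e}" for a b
      proof -
        have "z \<noteq> cf x y a" "z \<noteq> cf x y b" using that False unfolding cf_def by auto
        then show ?thesis using contr_map[of a b D x y] that xny by auto
      qed
      have "reach {e\<in>contr D x y. z \<notin> e} (cf x y p) (cf x y q)"
        using reach_map[where \<pi>="cf x y", OF r m] by blast
      then show "reach {e\<in>contr D x y. z \<notin> e} p q" using fix' pq by simp
    qed
  qed
  show ?thesis using simple c2 conn rem unfolding biconnected_def by blast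
qed



definition rmodel :: "'a set \<Rightarrow> 'a set set \<Rightarrow> 'a set \<Rightarrow> ('a \<Rightarrow> 'a set) \<Rightarrow> 'a set set \<Rightarrow> bool" where
  "rmodel W D N X DN \<longleftrightarrow> simple_graph N DN \<and> biconnected N DN \<and>
     (\<forall>v\<in>N. v \<in> X v \<and> X v \<subseteq> W \<and> graph_connected (X v) {e\<in>D. e \<subseteq> X v}) \<and>
     (\<forall>u\<in>N. \<forall>v\<in>N. u \<noteq> v \<longrightarrow> X u \<inter> X v = {}) \<and>
     (\<forall>u v. {u,v} \<in> DN \<longrightarrow> (\<exists>a\<in>X u. \<exists>b\<in>X v. {a,b} \<in> D))"

lemma contr_obtain:
  assumes "e' \<in> contr D x y"
  obtains e where "e \<in> D" "e \<noteq> {x,y}" "e' = cf x y ` e"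
  using assms unfolding contr_def by blast

lemma doubleton_cases: "{a,b} = {c,d} \<Longrightarrow> (a = c \<and> b = d) \<or> (a = d \<and> b = c)"
  by (auto simp: doubleton_eq_iff)

lemma lift_conn:
  assumes sg: "simple_graph W D" and xy: "{x,y} \<in> D"
    and v: "v \<in> X'" and gc: "graph_connected X' {e \<in> contr D x y. e \<subseteq> X'}"
    and Z: "Z = (if y \<in> X' then insert x X' else X')"
  shows "graph_connected Z {e\<in>D. e \<subseteq> Z}"
proof -
  let ?T = "{e\<in>D. e \<subseteq> Z}"
  have DW: "\<forall>e\<in>D. card e = 2" using sg unfolding simple_graph_def by auto
  have XZ: "X' \<subseteq> Z" using Z by auto
  have key: "reach ?T a b" if ab: "{a,b} \<in> {e \<in> contr D x y. e \<subseteq> X'}" for a b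
  proof -
    from ab have ab': "{a,b} \<in> contr D x y" "{a,b} \<subseteq> X'" by auto
    obtain e where e: "e \<in> D" "e \<noteq> {x,y}" "{a,b} = cf x y ` e" using contr_obtain[OF ab'(1)] by metis
    have "card e = 2" using DW e(1) by blast
    from contr_edge_cases[OF this e(2)] show ?thesis
    proof (elim disjE exE conjE)
      assume "x \<notin> e" "cf x y ` e = e"
      then have "e = {a,b}" using e(3) by simp
      then have "{a,b} \<in> ?T" using e(1) ab'(2) XZ by auto
      then show ?thesis by (rule reach_step)
    next
      fix q assume q: "e = {x,q}" "q \<noteq> x" "q \<noteq> y" "cf x y ` e = {y,q}"
      then have abq: "{a,b} = {y,q}" using e(3) by simp
      then have yq: "y \<in> X'" "q \<in> X'" using ab'(2) by auto
      then have Zi: "Z = insert x X'" using Z by simp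
      have t1: "{y,x} \<in> ?T" using xy yq Zi by (auto simp: insert_commute)
      have t2: "{x,q} \<in> ?T" using e(1) q(1) yq Zi by auto
      have r: "reach ?T y q" using reach_trans[OF reach_step[OF t1] reach_step[OF t2]] .
      from doubleton_cases[OF abq] show ?thesis
      proof
        assume "a = y \<and> b = q" then show ?thesis using r by simp
      next
        assume "a = q \<and> b = y" then show ?thesis using reach_sym[OF r] by simp
      qed
    qed
  qed
  have toV: "reach ?T p v" if p: "p \<in> Z" for p
  proof (cases "p \<in> X'")
    case True
    have "reach {e \<in> contr D x y. e \<subseteq> X'} p v" using gc True v unfolding graph_connected_def by blast
    then show ?thesis using reach_lift[of _ p v ?T] key by blast
  next
    case False
    then have pyx: "p = x" "y \<in> X'" using p Z by (auto split: if_splits)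
    then have Zi: "Z = insert x X'" using Z by simp
    have "{x,y} \<in> ?T" using xy pyx Zi by auto
    then have r1: "reach ?T x y" by (rule reach_step)
    have "reach {e \<in> contr D x y. e \<subseteq> X'} y v" using gc pyx v unfolding graph_connected_def by blast
    then have r2: "reach ?T y v" using reach_lift[of _ y v ?T] key by blast
    show ?thesis using reach_trans[OF r1 r2] pyx by simp
  qed
  show ?thesis unfolding graph_connected_def
  proof (intro ballI)
    fix p q assume "p \<in> Z" "q \<in> Z"
    then show "reach ?T p q" using reach_trans[OF toV[of p] reach_sym[OF toV[of q]]] by simp
  qed
qed

lemma lift_edge:
  assumes sg: "simple_graph W D" and xy: "{x,y} \<in> D"
    and ab: "{a,b} \<in> contr D x y" and a: "a \<in> Xu" and b: "b \<in> Xv"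
  shows "\<exists>a'\<in>(if y \<in> Xu then insert x Xu else Xu). \<exists>b'\<in>(if y \<in> Xv then insert x Xv else Xv). {a',b'} \<in> D"
proof -
  have DW: "\<forall>e\<in>D. card e = 2" using sg unfolding simple_graph_def by auto
  obtain e where e: "e \<in> D" "e \<noteq> {x,y}" "{a,b} = cf x y ` e" using contr_obtain[OF ab] by metis
  have "card e = 2" using DW e(1) by blast
  from contr_edge_cases[OF this e(2)] show ?thesis
  proof (elim disjE exE conjE)
    assume "x \<notin> e" "cf x y ` e = e"
    then have "e = {a,b}" using e(3) by simp
    then show ?thesis using e(1) a b by auto
  next
    fix q assume q: "e = {x,q}" "q \<noteq> x" "q \<noteq> y" "cf x y ` e = {y,q}"
    then have abq: "{a,b} = {y,q}" using e(3) by simp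
    from doubleton_cases[OF abq] show ?thesis
    proof
      assume "a = y \<and> b = q"
      then show ?thesis using e(1) q(1) a b by auto
    next
      assume "a = q \<and> b = y"
      then show ?thesis using e(1) q(1) a b by (auto simp: insert_commute)
    qed
  qed
qed

lemma rooted_aux:
  "card (W - N) = n \<Longrightarrow> simple_graph W D \<Longrightarrow> biconnected W D \<Longrightarrow> N \<subseteq> W \<Longrightarrow> card N \<ge> 2
    \<Longrightarrow> \<exists>X DN. rmodel W D N X DN"
proof (induction n arbitrary: W D)
  case 0
  have finW: "finite W" using "0.prems"(2) unfolding simple_graph_def by blast
  then have "W - N = {}" using "0.prems"(1) by simp
  then have WN: "W = N" using "0.prems"(4) by blast
  have "rmodel W D N (\<lambda>v. {v}) D"
    unfolding rmodel_def
  proof (intro conjI ballI allI impI)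
    show "simple_graph N D" "biconnected N D" using "0.prems" WN by auto
    fix v assume v: "v \<in> N"
    show "v \<in> {v}" by simp
    show "{v} \<subseteq> W" using v WN by simp
    show "graph_connected {v} {e\<in>D. e \<subseteq> {v}}" unfolding graph_connected_def by simp
  next
    fix u v assume "u \<noteq> v" then show "{u} \<inter> {v} = {}" by simp
  next
    fix u v assume "{u,v} \<in> D" then show "\<exists>a\<in>{u}. \<exists>b\<in>{v}. {a,b} \<in> D" by simp
  qed
  then show ?case by blast
next
  case (Suc n)
  have sg: "simple_graph W D" and bic: "biconnected W D" and NW: "N \<subseteq> W" and cN: "card N \<ge> 2"
    using Suc.prems by auto
  have finW: "finite W" using sg unfolding simple_graph_def by blast
  have "W - N \<noteq> {}" using Suc.prems(1) by (metis card.empty nat.distinct(1))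
  then obtain x where x: "x \<in> W" "x \<notin> N" by blast
  have NWx: "N \<subseteq> W - {x}" using NW x by blast
  have "card N \<le> card (W - {x})" using card_mono[OF _ NWx] finW by simp
  then have c3: "card W \<ge> 3" using cN x finW by (simp add: card_Diff_singleton)
  obtain y where y: "{x,y} \<in> D" "graph_connected (W - {x,y}) {e\<in>D. x \<notin> e \<and> y \<notin> e}"
    using good_neighbor[OF bic sg x(1) c3] by blast
  have cb: "simple_graph (W - {x}) (contr D x y)" "biconnected (W - {x}) (contr D x y)"
    using contract_bic[OF sg bic y(1) c3 y(2)] by auto
  have "W - {x} - N = (W - N) - {x}" by blast
  then have cn: "card (W - {x} - N) = n" using Suc.prems(1) x by (simp add: card_Diff_singleton)
  obtain X' DN where m: "rmodel (W - {x}) (contr D x y) N X' DN"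
    using Suc.IH[OF cn cb NWx cN] by blast
  define X where "X = (\<lambda>v. if y \<in> X' v then insert x (X' v) else X' v)"
  have m1: "simple_graph N DN" "biconnected N DN"
    and m2: "\<And>v. v \<in> N \<Longrightarrow> v \<in> X' v \<and> X' v \<subseteq> W - {x} \<and> graph_connected (X' v) {e\<in>contr D x y. e \<subseteq> X' v}"
    and m3: "\<And>u v. u \<in> N \<Longrightarrow> v \<in> N \<Longrightarrow> u \<noteq> v \<Longrightarrow> X' u \<inter> X' v = {}"
    and m4: "\<And>u v. {u,v} \<in> DN \<Longrightarrow> \<exists>a\<in>X' u. \<exists>b\<in>X' v. {a,b} \<in> contr D x y"
    using m unfolding rmodel_def by blast+
  have "rmodel W D N X DN"
    unfolding rmodel_def
  proof (intro conjI ballI allI impI)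
    show "simple_graph N DN" "biconnected N DN" using m1 by auto
    fix v assume v: "v \<in> N"
    show "v \<in> X v" using m2[OF v] unfolding X_def by simp
    show "X v \<subseteq> W" using m2[OF v] x unfolding X_def by auto
    show "graph_connected (X v) {e\<in>D. e \<subseteq> X v}"
      using lift_conn[OF sg y(1), of v "X' v" "X v"] m2[OF v] unfolding X_def by blast
  next
    fix u v assume uv: "u \<in> N" "v \<in> N" "u \<noteq> v"
    have d: "X' u \<inter> X' v = {}" using m3[OF uv] .
    have xu: "x \<notin> X' u" "x \<notin> X' v" using m2[OF uv(1)] m2[OF uv(2)] by auto
    show "X u \<inter> X v = {}" using d xu unfolding X_def by auto
  next
    fix u v assume "{u,v} \<in> DN"
    then obtain a b where ab: "a \<in> X' u" "b \<in> X' v" "{a,b} \<in> contr D x y" using m4 by blast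
    show "\<exists>a\<in>X u. \<exists>b\<in>X v. {a,b} \<in> D"
      using lift_edge[OF sg y(1) ab(3) ab(1) ab(2)] unfolding X_def by blast
  qed
  then show ?case by blast
qed



lemma min_sub:
  assumes sg: "simple_graph N DN" and bic: "biconnected N DN"
  shows "\<exists>D0 \<subseteq> DN. minimally_biconnected N D0 \<and> simple_graph N D0"
proof -
  let ?F = "{D0. D0 \<subseteq> DN \<and> biconnected N D0}"
  have finDN: "finite DN" using simple_finite_E[OF sg] .
  have fin: "finite ?F" using finDN by (rule rev_finite_subset[OF finite_Pow_iff[THEN iffD2]]) auto
  have ne: "?F \<noteq> {}" using bic by blast
  obtain m where m: "m \<in> ?F" "\<forall>b\<in>?F. b \<le> m \<longrightarrow> m = b" using finite_has_minimal[OF fin ne] by blast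
  have "minimally_biconnected N m"
    unfolding minimally_biconnected_def
  proof (intro conjI ballI notI)
    show "biconnected N m" using m(1) by blast
    fix e assume e: "e \<in> m" "biconnected N (m - {e})"
    then have i: "m - {e} \<in> ?F" using m(1) by blast
    have "m - {e} \<le> m" by blast
    then have "m = m - {e}" using m(2) i by simp
    then show False using e(1) by blast
  qed
  moreover have "simple_graph N m" using sg m(1) unfolding simple_graph_def by blast
  ultimately show ?thesis using m(1) by blast
qed

lemma bic_transfer:
  assumes inj: "inj_on h N" and SN: "\<forall>e\<in>S. e \<subseteq> N" and bic: "biconnected N S"
  shows "biconnected (h ` N) ((image h) ` S)"
proof -
  have edge: "{h a, h b} \<in> (image h) ` T" if "{a,b} \<in> T" for a b T
    using that by (metis image_empty image_eqI image_insert)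
  have mapr: "reach ((image h) ` T) (h x) (h y)" if "reach T x y" for T x y
    using reach_map[where \<pi>=h, OF that] edge by blast
  have c: "card (h ` N) = card N" using card_image[OF inj] .
  have conn: "graph_connected (h ` N) ((image h) ` S)"
    unfolding graph_connected_def
  proof (intro ballI)
    fix p' q' assume "p' \<in> h ` N" "q' \<in> h ` N"
    then obtain p q where pq: "p \<in> N" "q \<in> N" "p' = h p" "q' = h q" by blast
    have "reach S p q" using bic pq unfolding biconnected_def graph_connected_def by blast
    then show "reach ((image h) ` S) p' q'" using mapr pq by blast
  qed
  have rem: "graph_connected (h ` N - {v'}) {e\<in>(image h) ` S. v' \<notin> e}" if v': "v' \<in> h ` N" for v'
  proof -
    obtain v where v: "v \<in> N" "v' = h v" using v' by blast
    have sub: "(image h) ` {e\<in>S. v \<notin> e} \<subseteq> {e\<in>(image h) ` S. v' \<notin> e}"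
    proof
      fix e' assume "e' \<in> (image h) ` {e\<in>S. v \<notin> e}"
      then obtain e where e: "e \<in> S" "v \<notin> e" "e' = h ` e" by blast
      have "h v \<notin> h ` e" using inj e(1,2) v(1) SN by (meson inj_on_image_mem_iff)
      then have "v' \<notin> e'" using e(3) v(2) by simp
      moreover have "e' \<in> (image h) ` S" using e(1,3) by blast
      ultimately show "e' \<in> {e\<in>(image h) ` S. v' \<notin> e}" by simp
    qed
    have gv: "graph_connected (N - {v}) {e\<in>S. v \<notin> e}" using bic v(1) unfolding biconnected_def by blast
    show ?thesis unfolding graph_connected_def
    proof (intro ballI)
      fix p' q' assume pq: "p' \<in> h ` N - {v'}" "q' \<in> h ` N - {v'}"
      obtain p q where pq': "p \<in> N - {v}" "q \<in> N - {v}" "p' = h p" "q' = h q" using pq v by blast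
      have "reach {e\<in>S. v \<notin> e} p q" using gv pq' unfolding graph_connected_def by blast
      then have "reach ((image h) ` {e\<in>S. v \<notin> e}) p' q'" using mapr pq' by blast
      then show "reach {e\<in>(image h) ` S. v' \<notin> e} p' q'" using reach_mono[OF _ sub] by blast
    qed
  qed
  show ?thesis using bic c conn rem unfolding biconnected_def by auto
qed

lemma image_image_inv:
  assumes inj: "inj_on h N" and SN: "\<forall>e\<in>S. e \<subseteq> N"
  shows "(image (inv_into N h)) ` ((image h) ` S) = S"
proof -
  have "inv_into N h ` (h ` e) = e" if "e \<in> S" for e
    using that SN inj by (meson inv_into_image_cancel)
  then show ?thesis by (simp add: image_image)
qed

lemma minbic_transfer:
  assumes inj: "inj_on h N" and sg: "simple_graph N S" and mb: "minimally_biconnected N S"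
  shows "minimally_biconnected (h ` N) ((image h) ` S) \<and> simple_graph (h ` N) ((image h) ` S)"
proof -
  have SN: "\<forall>e\<in>S. e \<subseteq> N" and S2: "\<forall>e\<in>S. card e = 2" and finN: "finite N"
    using sg unfolding simple_graph_def by auto
  have simple: "simple_graph (h ` N) ((image h) ` S)"
    unfolding simple_graph_def
  proof (intro conjI ballI)
    show "finite (h ` N)" using finN by simp
    fix e' assume "e' \<in> (image h) ` S"
    then obtain e where e: "e \<in> S" "e' = h ` e" by blast
    have "inj_on h e" using inj e(1) SN inj_on_subset by blast
    then show "card e' = 2" using e S2 card_image by metis
    show "e' \<subseteq> h ` N" using e SN by blast
  qed
  have bic: "biconnected (h ` N) ((image h) ` S)"
    using bic_transfer[OF inj SN] mb unfolding minimally_biconnected_def by blast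
  have injS: "inj_on (image h) S"
  proof (rule inj_onI)
    fix x y assume "x \<in> S" "y \<in> S" "h ` x = h ` y"
    then show "x = y" using inj_on_image_eq_iff[OF inj] SN by metis
  qed
  have "\<not> biconnected (h ` N) ((image h) ` S - {e'})" if e': "e' \<in> (image h) ` S" for e'
  proof
    assume b: "biconnected (h ` N) ((image h) ` S - {e'})"
    obtain e where e: "e \<in> S" "e' = h ` e" using e' by blast
    have eq: "(image h) ` S - {e'} = (image h) ` (S - {e})" using e injS by (simp add: inj_on_image_set_diff)
    let ?g = "inv_into N h"
    have inj2: "inj_on ?g (h ` N)" by (simp add: inj_on_inv_into)
    have SN2: "\<forall>e\<in>(image h) ` (S - {e}). e \<subseteq> h ` N" using SN by blast
    have "biconnected (?g ` (h ` N)) ((image ?g) ` ((image h) ` (S - {e})))"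
      using bic_transfer[OF inj2 SN2] b eq by simp
    moreover have "?g ` (h ` N) = N" using inj by simp
    moreover have "(image ?g) ` ((image h) ` (S - {e})) = S - {e}"
    proof -
      have "\<forall>e'\<in>S - {e}. e' \<subseteq> N" using SN by blast
      then show ?thesis using image_image_inv[OF inj, of "S - {e}"] by simp
    qed
    ultimately have "biconnected N (S - {e})" by simp
    then show False using mb e(1) unfolding minimally_biconnected_def by blast
  qed
  then show ?thesis using simple bic unfolding minimally_biconnected_def by blast
qed



theorem proposition5p5:
  fixes V :: "'a set" and E :: "'a set set" and w :: 'a and k :: nat
  assumes "simple_graph V E"
    and "biconnected V E"
    and "w \<in> V"
    and "flacet E graphic_indep {e \<in> E. w \<notin> e}"
    and "k_level E graphic_indep {e \<in> E. w \<notin> e} k"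
  shows "\<exists>(VH :: nat set) EH (a :: nat).
           simple_graph VH EH \<and> card VH = k \<and> a \<notin> VH \<and>
           minimally_biconnected VH EH \<and>
           has_minor V E (fst (cone VH EH a)) (snd (cone VH EH a))"
proof -
  note sg = assms(1) and bc = assms(2) and wV = assms(3)
  let ?F = "{e \<in> E. w \<notin> e}" and ?Nw = "{x. {w,x} \<in> E}"
  have Fne: "?F \<noteq> {}" and rc: "restriction_connected E graphic_indep ?F"
    using assms(4) unfolding flacet_def by auto
  have bicW: "biconnected (V - {w}) ?F" using Gw_biconnected[OF sg bc wV Fne rc] .
  have sgW: "simple_graph (V - {w}) ?F" using sg unfolding simple_graph_def by auto
  have kb: "2 \<le> k" "k \<le> card ?Nw" using levels_bounds[OF sg bc wV Fne assms(5)] by auto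
  obtain N' where N': "N' \<subseteq> ?Nw" "card N' = k" "finite N'"
    using obtain_subset_with_card_n[OF kb(2)] by metis
  have NwV: "?Nw \<subseteq> V - {w}" using N_sub[OF sg bc wV Fne] .
  have N'W: "N' \<subseteq> V - {w}" using N' NwV by blast
  obtain X DN where m: "rmodel (V - {w}) ?F N' X DN"
    using rooted_aux[OF refl sgW bicW N'W] N'(2) kb(1) by metis
  have m1: "simple_graph N' DN" "biconnected N' DN"
    and m2: "\<And>v. v \<in> N' \<Longrightarrow> v \<in> X v \<and> X v \<subseteq> V - {w} \<and> graph_connected (X v) {e\<in>?F. e \<subseteq> X v}"
    and m3: "\<And>u v. u \<in> N' \<Longrightarrow> v \<in> N' \<Longrightarrow> u \<noteq> v \<Longrightarrow> X u \<inter> X v = {}"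
    and m4: "\<And>u v. {u,v} \<in> DN \<Longrightarrow> \<exists>a\<in>X u. \<exists>b\<in>X v. {a,b} \<in> ?F"
    using m unfolding rmodel_def by blast+
  obtain D0 where D0: "D0 \<subseteq> DN" "minimally_biconnected N' D0" "simple_graph N' D0"
    using min_sub[OF m1] by blast
  obtain g where g: "bij_betw g {0..<k} N'" using ex_bij_betw_nat_finite[OF N'(3)] N'(2) by metis
  define h where "h = inv_into {0..<k} g"
  have hb: "bij_betw h N' {0..<k}" unfolding h_def by (rule bij_betw_inv_into[OF g])
  have hinj: "inj_on h N'" and hN: "h ` N' = {0..<k}" using hb unfolding bij_betw_def by auto
  have gh: "g (h p) = p" if "p \<in> N'" for p
    unfolding h_def using g that by (meson bij_betw_inv_into_right)
  have gN: "g i \<in> N'" if "i < k" for i using g that unfolding bij_betw_def by auto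
  have ginj: "inj_on g {0..<k}" using g unfolding bij_betw_def by auto
  define EH where "EH = (image h) ` D0"
  have tr: "minimally_biconnected {0..<k} EH" "simple_graph {0..<k} EH"
    using minbic_transfer[OF hinj D0(3) D0(2)] hN unfolding EH_def by auto
  define Y where "Y = (\<lambda>i. if i = k then {w} else X (g i))"
  have D0N: "\<forall>e\<in>D0. e \<subseteq> N' \<and> card e = 2" using D0(3) unfolding simple_graph_def by auto
  have minor: "has_minor V E (insert k {0..<k}) (EH \<union> {{k, v} | v. v \<in> {0..<k}})"
    unfolding has_minor_def
  proof (rule exI[of _ Y], intro conjI ballI allI impI)
    fix i assume i: "i \<in> insert k {0..<k}"
    show "Y i \<noteq> {}"
    proof (cases "i = k")
      case True then show ?thesis unfolding Y_def by simp
    next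
      case False
      then have "g i \<in> N'" using i gN by simp
      then show ?thesis using m2 False unfolding Y_def by auto
    qed
    show "Y i \<subseteq> V"
    proof (cases "i = k")
      case True then show ?thesis unfolding Y_def using wV by simp
    next
      case False
      then have "g i \<in> N'" using i gN by simp
      then show ?thesis using m2 False unfolding Y_def by auto
    qed
    show "graph_connected (Y i) {e \<in> E. e \<subseteq> Y i}"
    proof (cases "i = k")
      case True then show ?thesis unfolding Y_def graph_connected_def by simp
    next
      case False
      then have gi: "g i \<in> N'" using i gN by simp
      have gc: "graph_connected (X (g i)) {e\<in>?F. e \<subseteq> X (g i)}" using m2[OF gi] by blast
      have sub: "{e\<in>?F. e \<subseteq> X (g i)} \<subseteq> {e \<in> E. e \<subseteq> X (g i)}" by blast
      show ?thesis unfolding Y_def graph_connected_def using False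
      proof (simp, intro ballI)
        fix p q assume "p \<in> X (g i)" "q \<in> X (g i)"
        then have "reach {e\<in>?F. e \<subseteq> X (g i)} p q" using gc unfolding graph_connected_def by blast
        then show "reach {e \<in> E. e \<subseteq> X (g i)} p q" using reach_mono[OF _ sub] by blast
      qed
    qed
  next
    fix i j assume i: "i \<in> insert k {0..<k}" and j: "j \<in> insert k {0..<k}" and ij: "i \<noteq> j"
    show "Y i \<inter> Y j = {}"
    proof (cases "i = k")
      case True
      then have "j < k" using j ij by simp
      then have "X (g j) \<subseteq> V - {w}" using m2 gN by blast
      then show ?thesis using True ij unfolding Y_def by auto
    next
      case False
      then have ik: "i < k" using i by simp
      show ?thesis
      proof (cases "j = k")
        case True
        have "X (g i) \<subseteq> V - {w}" using m2 gN ik by blast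
        then show ?thesis using True ij unfolding Y_def by auto
      next
        case False
        then have jk: "j < k" using j by simp
        have "g i \<noteq> g j" using ginj ik jk ij unfolding inj_on_def by auto
        then have "X (g i) \<inter> X (g j) = {}" using m3 gN ik jk by blast
        then show ?thesis using False \<open>i \<noteq> k\<close> unfolding Y_def by simp
      qed
    qed
  next
    fix u v assume uv: "{u,v} \<in> EH \<union> {{k, v} | v. v \<in> {0..<k}}"
    show "\<exists>a\<in>Y u. \<exists>b\<in>Y v. {a, b} \<in> E"
    proof (cases "{u,v} \<in> EH")
      case True
      then obtain e where e: "e \<in> D0" "{u,v} = h ` e" unfolding EH_def by blast
      obtain p q where pq: "e = {p,q}" "p \<noteq> q" using D0N e(1) card2_obtain by metis
      have pqN: "p \<in> N'" "q \<in> N'" using D0N e(1) pq by auto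
      have huv: "{u,v} = {h p, h q}" using e(2) pq by simp
      have hk: "h p < k" "h q < k" using hN pqN by auto
      have eDN: "{p,q} \<in> DN" "{q,p} \<in> DN" using D0(1) e(1) pq by (auto simp: insert_commute)
      from doubleton_cases[OF huv] show ?thesis
      proof
        assume a: "u = h p \<and> v = h q"
        then have "Y u = X p" "Y v = X q" unfolding Y_def using hk gh pqN by auto
        then show ?thesis using m4[OF eDN(1)] by auto
      next
        assume a: "u = h q \<and> v = h p"
        then have "Y u = X q" "Y v = X p" unfolding Y_def using hk gh pqN by auto
        then show ?thesis using m4[OF eDN(2)] by auto
      qed
    next
      case False
      then obtain j where j: "j < k" "{u,v} = {k,j}" using uv by auto
      have gj: "g j \<in> N'" using gN j(1) by simp
      then have wg: "{w, g j} \<in> E" using N' by blast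
      have inX: "g j \<in> X (g j)" using m2[OF gj] by blast
      from doubleton_cases[OF j(2)] show ?thesis
      proof
        assume "u = k \<and> v = j"
        then show ?thesis using wg inX j(1) unfolding Y_def by auto
      next
        assume "u = j \<and> v = k"
        then show ?thesis using wg inX j(1) unfolding Y_def by (auto simp: insert_commute)
      qed
    qed
  qed
  show ?thesis
  proof (intro exI conjI)
    show "simple_graph {0..<k} EH" using tr by blast
    show "card {0..<k} = k" by simp
    show "k \<notin> {0..<k}" by simp
    show "minimally_biconnected {0..<k} EH" using tr by blast
    show "has_minor V E (fst (cone {0..<k} EH k)) (snd (cone {0..<k} EH k))"
      using minor unfolding cone_def by simp
  qed
qed


end
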